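(* Let $c=1$, $\lambda_1,\lambda_2,\mu_1,\mu_2>0$, $\lambda=\lambda_1+\lambda_2$, let $X$ be the Markov chain described in the context and fix $\alpha$ with $\mathrm{Re}\,\alpha>0$. Then the scalar $G(\alpha)$ satisfies $$(\lambda+\mu_1+\alpha)G(\alpha)=\mu_1+\lambda_1G(\alpha)^2+\lambda_2G(\alpha)\,\phi_{\lambda_2,\mu_2}\bigl(\lambda_1(1-G(\alpha))+\alpha\bigr).$$
   Context: With $c=1$, the Markov chain $X$ on $\mathbb{N}_0^2$ has only nonzero off-diagonal rates $q((i,j),(i+1,j))=\lambda_1$, $q((i,j),(i,j+1))=\lambda_2$ ($i,j\ge0$), $q((i,0),(i-1,0))=\mu_1$ ($i\ge1$), $q((i,j),(i,j-1))=\mu_2$ ($j\ge1$) (single-server queue with two classes, class 2 preemptive priority). For $A\subset\mathbb{N}_0^2$, $\tau_A=\inf\{t>0:X(t^-)\ne X(t)\in A\}$; $E_z$ is expectation given $X(0)=z$. $G(\alpha)=E_{(i+1,0)}[e^{-\alpha\tau_{\{(i,0)\}}}]$, which does not depend on $i\ge0$. For $\lambda',\mu'>0$, $\phi_{\lambda',\mu'}(s)=\frac{\lambda'+\mu'+s-\sqrt{(\lambda'+\mu'+s)^2-4\lambda'\mu'}}{2\lambda'}$ is the Laplace–Stieltjes transform of the busy period of an $M/M/1$ queue (arrival rate $\lambda'$, service rate $\mu'$) started by one customer. *)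

theory Defs
  imports "HOL-Probability.Probability"
begin

text \<open>Single-server two-class preemptive-priority queue (c = 1) as a continuous-time
Markov chain on nat x nat, constructed explicitly from an i.i.d. sequence of pairs
(E_k, U_k), E_k ~ Exp(1), U_k ~ Uniform[0,1]: the embedded jump chain moves from z
to w with probability q(z,w)/q(z) (chosen by U_k), and the k-th holding time is
E_k / q(Y_k).\<close>

type_synonym state = "nat \<times> nat"

definition rate :: "real \<Rightarrow> real \<Rightarrow> real \<Rightarrow> real \<Rightarrow> state \<Rightarrow> state \<Rightarrow> real" where
  "rate l1 l2 m1 m2 z w =
     (let (i, j) = z in
       if w = (i + 1, j) then l1
       else if w = (i, j + 1) then l2
       else if j = 0 \<and> i \<ge> 1 \<and> w = (i - 1, 0) then m1
       else if j \<ge> 1 \<and> w = (i, j - 1) then m2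
       else 0)"

definition qout :: "real \<Rightarrow> real \<Rightarrow> real \<Rightarrow> real \<Rightarrow> state \<Rightarrow> real" where
  "qout l1 l2 m1 m2 z =
     (let (i, j) = z in
       l1 + l2 + (if j = 0 \<and> i \<ge> 1 then m1 else 0) + (if j \<ge> 1 then m2 else 0))"

definition jump :: "real \<Rightarrow> real \<Rightarrow> real \<Rightarrow> real \<Rightarrow> state \<Rightarrow> real \<Rightarrow> state" where
  "jump l1 l2 m1 m2 z u =
     (let (i, j) = z; Q = qout l1 l2 m1 m2 z in
       if u * Q < rate l1 l2 m1 m2 z (i + 1, j) then (i + 1, j)
       else if u * Q < rate l1 l2 m1 m2 z (i + 1, j) + rate l1 l2 m1 m2 z (i, j + 1) then (i, j + 1)
       else if j = 0 then (i - 1, 0)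
       else (i, j - 1))"

definition ctmc_space :: "(nat \<Rightarrow> real \<times> real) measure" where
  "ctmc_space = PiM UNIV (\<lambda>_. density lborel (exponential_density 1) \<Otimes>\<^sub>M uniform_measure lborel {0..1})"

primrec jchain :: "real \<Rightarrow> real \<Rightarrow> real \<Rightarrow> real \<Rightarrow> state \<Rightarrow> (nat \<Rightarrow> real \<times> real) \<Rightarrow> nat \<Rightarrow> state" where
  "jchain l1 l2 m1 m2 z0 \<omega> 0 = z0"
| "jchain l1 l2 m1 m2 z0 \<omega> (Suc k) = jump l1 l2 m1 m2 (jchain l1 l2 m1 m2 z0 \<omega> k) (snd (\<omega> k))"

definition jtime :: "real \<Rightarrow> real \<Rightarrow> real \<Rightarrow> real \<Rightarrow> state \<Rightarrow> (nat \<Rightarrow> real \<times> real) \<Rightarrow> nat \<Rightarrow> real" where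
  "jtime l1 l2 m1 m2 z0 \<omega> n =
     (\<Sum>k<n. fst (\<omega> k) / qout l1 l2 m1 m2 (jchain l1 l2 m1 m2 z0 \<omega> k))"

definition jump_into :: "real \<Rightarrow> real \<Rightarrow> real \<Rightarrow> real \<Rightarrow> state \<Rightarrow> state set \<Rightarrow> (nat \<Rightarrow> real \<times> real) \<Rightarrow> nat \<Rightarrow> bool" where
  "jump_into l1 l2 m1 m2 z0 A \<omega> n \<longleftrightarrow>
     n \<ge> 1 \<and> jchain l1 l2 m1 m2 z0 \<omega> n \<in> A \<and>
     jchain l1 l2 m1 m2 z0 \<omega> (n - 1) \<noteq> jchain l1 l2 m1 m2 z0 \<omega> n"

text \<open>E_z[exp(-alpha tau_A)], with exp(-alpha tau_A) = 0 on {tau_A = infinity}.\<close>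
definition hit_lst :: "real \<Rightarrow> real \<Rightarrow> real \<Rightarrow> real \<Rightarrow> state \<Rightarrow> state set \<Rightarrow> complex \<Rightarrow> complex" where
  "hit_lst l1 l2 m1 m2 z A \<alpha> =
     (\<integral>\<omega>. (if \<exists>n. jump_into l1 l2 m1 m2 z A \<omega> n
            then exp (- \<alpha> * complex_of_real
                     (jtime l1 l2 m1 m2 z \<omega> (LEAST n. jump_into l1 l2 m1 m2 z A \<omega> n)))
            else 0) \<partial>ctmc_space)"

definition Gfun :: "real \<Rightarrow> real \<Rightarrow> real \<Rightarrow> real \<Rightarrow> nat \<Rightarrow> complex \<Rightarrow> complex" where
  "Gfun l1 l2 m1 m2 i \<alpha> = hit_lst l1 l2 m1 m2 (i + 1, 0) {(i, 0)} \<alpha>"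

text \<open>Busy-period LST of M/M/1 (principal complex square root).\<close>
definition phi :: "real \<Rightarrow> real \<Rightarrow> complex \<Rightarrow> complex" where
  "phi l m s = (of_real l + of_real m + s
                - csqrt ((of_real l + of_real m + s)\<^sup>2 - 4 * of_real l * of_real m)) / (2 * of_real l)"

end

theory Submission
  imports Defs
begin


lemma cexp_int:
  fixes \<beta> :: complex
  assumes b: "0 < Re \<beta>"
  shows "(CLBINT x=0..\<infinity>. exp (- \<beta> * complex_of_real x)) = 1 / \<beta>"
proof -
  have bnz: "\<beta> \<noteq> 0" using b by auto
  let ?F = "\<lambda>x::real. - exp (- \<beta> * complex_of_real x) / \<beta>"
  have "(CLBINT x=0..\<infinity>. exp (- \<beta> * complex_of_real x)) = 0 - (- 1 / \<beta>)"
  proof (rule interval_integral_FTC_integrable)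
    show "(0::ereal) < \<infinity>" by simp
    fix x :: real
    show "(?F has_vector_derivative exp (- \<beta> * complex_of_real x)) (at x)"
    proof -
      have d1: "(complex_of_real has_vector_derivative 1) (at x)"
        using has_vector_derivative_of_real[OF DERIV_ident[where F="at x"]] by simp
      have d2: "((\<lambda>z. - exp (- \<beta> * z) / \<beta>) has_field_derivative exp (- \<beta> * complex_of_real x)) (at (complex_of_real x))"
        using bnz by (auto intro!: derivative_eq_intros simp: field_simps)
      show ?thesis using field_vector_diff_chain_at[OF d1 d2] by (simp add: o_def)
    qed
    show "isCont (\<lambda>x. exp (- \<beta> * complex_of_real x)) x" by (intro continuous_intros)
  next
    have ei: "einterval 0 \<infinity> = {0::real<..}" by (auto simp: einterval_def zero_ereal_def)
    show "set_integrable lborel (einterval 0 \<infinity>) (\<lambda>x. exp (- \<beta> * complex_of_real x))"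
      unfolding ei
    proof (rule set_integrable_bound[OF integrable_I0i_exp_mscale[OF b]])
      show "set_borel_measurable lborel {0<..} (\<lambda>x. exp (- \<beta> * complex_of_real x))"
        unfolding set_borel_measurable_def by measurable
      show "AE x in lborel. x \<in> {0<..} \<longrightarrow> norm (exp (- \<beta> * complex_of_real x)) \<le> norm (exp (- (x * Re \<beta>)))"
        by (auto simp: mult.commute)
    qed
  next
    show "((?F \<circ> real_of_ereal) \<longlongrightarrow> - 1 / \<beta>) (at_right 0)"
      unfolding zero_ereal_def ereal_tendsto_simps
      using bnz by (auto intro!: tendsto_eq_intros)
    have *: "((\<lambda>t::real. exp (- \<beta> * complex_of_real t)) \<longlongrightarrow> 0) at_top"
    proof (rule tendsto_norm_zero_cancel)
      have "((\<lambda>t::real. exp (- (t * Re \<beta>))) \<longlongrightarrow> 0) at_top"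
        using b by real_asymp
      then show "((\<lambda>t::real. norm (exp (- \<beta> * complex_of_real t))) \<longlongrightarrow> 0) at_top"
        by (simp add: mult.commute)
    qed
    show "((?F \<circ> real_of_ereal) \<longlongrightarrow> 0) (at_left \<infinity>)"
      unfolding ereal_tendsto_simps
      using tendsto_divide[OF tendsto_minus[OF *] tendsto_const[of \<beta>]] bnz by simp
  qed
  then show ?thesis by simp
qed

lemma E1_int:
  fixes \<alpha> :: complex and q :: real
  assumes q: "0 < q" and a: "0 \<le> Re \<alpha>"
  shows "(\<integral>x. exp (- \<alpha> * complex_of_real (x / q)) \<partial>density lborel (exponential_density 1)) = of_real q / (of_real q + \<alpha>)"
proof -
  define \<beta> where "\<beta> = 1 + \<alpha> / of_real q"
  have b: "0 < Re \<beta>" using q a unfolding \<beta>_def by (simp add: add_pos_nonneg divide_nonneg_pos)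
  have "(\<integral>x. exp (- \<alpha> * complex_of_real (x / q)) \<partial>density lborel (exponential_density 1)) =
      (\<integral>x. exponential_density 1 x *\<^sub>R exp (- \<alpha> * complex_of_real (x / q)) \<partial>lborel)"
    by (rule integral_density) (auto simp: exponential_density_def)
  also have "\<dots> = (\<integral>x. indicator {0<..} x *\<^sub>R exp (- \<beta> * complex_of_real x) \<partial>lborel)"
  proof (rule integral_cong_AE)
    show "AE x in lborel. exponential_density 1 x *\<^sub>R exp (- \<alpha> * complex_of_real (x / q)) =
        indicator {0<..} x *\<^sub>R exp (- \<beta> * complex_of_real x)"
      using AE_lborel_singleton[of 0]
    proof eventually_elim
      case (elim x)
      show ?case
      proof (cases "x < 0")
        case True then show ?thesis by (simp add: exponential_density_def)
      next
        case False
        then have "0 < x" using elim by simp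
        have "exponential_density 1 x *\<^sub>R exp (- \<alpha> * complex_of_real (x / q)) =
            exp (complex_of_real (- x)) * exp (- \<alpha> * complex_of_real (x / q))"
          using False by (simp add: exponential_density_def scaleR_conv_of_real exp_of_real[symmetric])
        also have "\<dots> = exp (complex_of_real (- x) + - \<alpha> * complex_of_real (x / q))"
          by (simp only: exp_add)
        also have "complex_of_real (- x) + - \<alpha> * complex_of_real (x / q) = - \<beta> * complex_of_real x"
          unfolding \<beta>_def using q by (simp add: field_simps)
        finally have "exponential_density 1 x *\<^sub>R exp (- \<alpha> * complex_of_real (x / q)) = exp (- \<beta> * complex_of_real x)" .
        then show ?thesis using \<open>0 < x\<close> by simp
      qed
    qed
  qed measurable
  also have "\<dots> = (CLBINT x=0..\<infinity>. exp (- \<beta> * complex_of_real x))"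
    by (simp add: interval_lebesgue_integral_0_infty set_lebesgue_integral_def)
  also have "\<dots> = 1 / \<beta>" by (rule cexp_int[OF b])
  also have "\<dots> = of_real q / (of_real q + \<alpha>)"
    unfolding \<beta>_def using q by (simp add: field_simps)
  finally show ?thesis .
qed

lemma U1_meas:
  fixes t1 t2 :: real
  assumes t: "0 \<le> t1" "t1 \<le> t2" "t2 \<le> 1"
  shows "measure (uniform_measure lborel {0..1}) {..<t1} = t1"
    "measure (uniform_measure lborel {0..1}) {t1..<t2} = t2 - t1"
    "measure (uniform_measure lborel {0..1}) {t2..} = 1 - t2"
proof -
  have "{0..1} \<inter> {..<t1} = {0..<t1}" using t by auto
  then show "measure (uniform_measure lborel {0..1}) {..<t1} = t1" using t by simp
  have "{0..1} \<inter> {t1..<t2} = {t1..<t2}" using t by auto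
  then show "measure (uniform_measure lborel {0..1}) {t1..<t2} = t2 - t1" using t by simp
  have "{0..1} \<inter> {t2..} = {t2..1}" using t by auto
  then show "measure (uniform_measure lborel {0..1}) {t2..} = 1 - t2" using t by simp
qed

lemma U1_int:
  fixes c1 c2 Q :: real and a1 a2 a3 :: complex
  assumes c: "0 \<le> c1" "0 \<le> c2" "c1 + c2 \<le> Q" "0 < Q"
  shows "(\<integral>u. (if u * Q < c1 then a1 else if u * Q < c1 + c2 then a2 else a3) \<partial>uniform_measure lborel {0..1})
     = (of_real c1 * a1 + of_real c2 * a2 + of_real (Q - c1 - c2) * a3) / of_real Q"
proof -
  let ?U = "uniform_measure lborel {0..1::real}"
  interpret PU: prob_space ?U by (rule prob_space_uniform_measure) auto
  define t1 where "t1 = c1 / Q"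
  define t2 where "t2 = (c1 + c2) / Q"
  have t: "0 \<le> t1" "t1 \<le> t2" "t2 \<le> 1" using c unfolding t1_def t2_def by (auto simp: divide_simps)
  have eq: "(if u * Q < c1 then a1 else if u * Q < c1 + c2 then a2 else a3) =
     indicator {..<t1} u *\<^sub>R a1 + indicator {t1..<t2} u *\<^sub>R a2 + indicator {t2..} u *\<^sub>R a3" for u
    using c t unfolding t1_def t2_def by (auto simp: indicator_def field_simps)
  have int: "integrable ?U (\<lambda>u. indicator A u *\<^sub>R a)" if "A \<in> sets borel" for A and a :: complex
    using that by (intro PU.integrable_const_bound[where B="norm a"]) (auto simp: indicator_def)
  have ii: "(\<integral>u. indicator A u *\<^sub>R a \<partial>?U) = measure ?U A *\<^sub>R a" if "A \<in> sets borel" for A and a :: complex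
  proof -
    have "integrable ?U (indicator A :: real \<Rightarrow> real)"
      using that by (intro PU.integrable_const_bound[where B=1]) (auto simp: indicator_def)
    then show ?thesis by simp
  qed
  have "(\<integral>u. (if u * Q < c1 then a1 else if u * Q < c1 + c2 then a2 else a3) \<partial>?U) =
     (\<integral>u. indicator {..<t1} u *\<^sub>R a1 + indicator {t1..<t2} u *\<^sub>R a2 + indicator {t2..} u *\<^sub>R a3 \<partial>?U)"
    unfolding eq ..
  also have "\<dots> = t1 *\<^sub>R a1 + (t2 - t1) *\<^sub>R a2 + (1 - t2) *\<^sub>R a3"
    using int t by (simp add: ii U1_meas[OF t])
  also have "\<dots> = (of_real c1 * a1 + of_real c2 * a2 + of_real (Q - c1 - c2) * a3) / of_real Q"
    using c unfolding t1_def t2_def by (simp add: scaleR_conv_of_real field_simps)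
  finally show ?thesis .
qed



abbreviation "E1 \<equiv> density lborel (exponential_density (1::real))"
abbreviation "U1 \<equiv> uniform_measure lborel {0..(1::real)}"
abbreviation "M0 \<equiv> E1 \<Otimes>\<^sub>M U1"

lemma sets_M0: "sets M0 = sets (borel \<Otimes>\<^sub>M borel)"
  by (intro sets_pair_measure_cong) auto

lemma jump_meas[measurable]: "jump l1 l2 m1 m2 z \<in> borel_measurable borel \<or> True"
  by simp

lemma jump_meas2: "(\<lambda>u. jump l1 l2 m1 m2 z u) \<in> measurable borel (count_space UNIV)"
  unfolding jump_def Let_def by (cases z) simp

lemma jchain_meas: "(\<lambda>\<omega>. jchain l1 l2 m1 m2 z \<omega> k) \<in> measurable ctmc_space (count_space UNIV)"
proof (induction k)
  case 0 then show ?case by simp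
next
  case (Suc k)
  have s: "(\<lambda>\<omega>. snd (\<omega> k)) \<in> borel_measurable ctmc_space"
  proof -
    have "(\<lambda>\<omega>. \<omega> k) \<in> measurable ctmc_space M0" unfolding ctmc_space_def by measurable
    moreover have "snd \<in> borel_measurable M0" 
      using measurable_snd[of "borel::real measure" "borel::real measure"] 
      by (simp add: measurable_cong_sets[OF sets_M0])
    ultimately show ?thesis by (rule measurable_compose[where g=snd])
  qed
  show ?case
    apply simp
    apply (rule measurable_compose_countable[where f="\<lambda>w \<omega>. jump l1 l2 m1 m2 w (snd (\<omega> k))", OF _ Suc])
    using measurable_compose[OF s jump_meas2] by simp
qed

definition Fh :: "real \<Rightarrow> real \<Rightarrow> real \<Rightarrow> real \<Rightarrow> state \<Rightarrow> state set \<Rightarrow> complex \<Rightarrow> (nat \<Rightarrow> real \<times> real) \<Rightarrow> complex" where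
  "Fh l1 l2 m1 m2 z A \<alpha> \<omega> = (if \<exists>n. jump_into l1 l2 m1 m2 z A \<omega> n
            then exp (- \<alpha> * complex_of_real
                     (jtime l1 l2 m1 m2 z \<omega> (LEAST n. jump_into l1 l2 m1 m2 z A \<omega> n)))
            else 0)"

lemma hit_Fh: "hit_lst l1 l2 m1 m2 z A \<alpha> = (\<integral>\<omega>. Fh l1 l2 m1 m2 z A \<alpha> \<omega> \<partial>ctmc_space)"
  unfolding hit_lst_def Fh_def ..

lemma jchain_shift: "jchain l1 l2 m1 m2 z (case_nat s \<omega>) (Suc k) = jchain l1 l2 m1 m2 (jump l1 l2 m1 m2 z (snd s)) \<omega> k"
  by (induction k) auto

lemma jtime_shift: "jtime l1 l2 m1 m2 z (case_nat s \<omega>) (Suc n) =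
   fst s / qout l1 l2 m1 m2 z + jtime l1 l2 m1 m2 (jump l1 l2 m1 m2 z (snd s)) \<omega> n"
  unfolding jtime_def by (subst sum.lessThan_Suc_shift) (simp add: jchain_shift del: jchain.simps(2))

lemma jump_into_shift:
  assumes "jump l1 l2 m1 m2 z (snd s) \<notin> A"
  shows "jump_into l1 l2 m1 m2 z A (case_nat s \<omega>) n \<longleftrightarrow> (\<exists>m. n = Suc m \<and> jump_into l1 l2 m1 m2 (jump l1 l2 m1 m2 z (snd s)) A \<omega> m)"
proof (cases n)
  case 0 then show ?thesis by (simp add: jump_into_def)
next
  case (Suc m)
  show ?thesis
  proof (cases m)
    case 0 with Suc assms show ?thesis by (simp add: jump_into_def)
  next
    case (Suc k)
    with \<open>n = Suc m\<close> show ?thesis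
      by (simp add: jump_into_def jchain_shift del: jchain.simps)
  qed
qed

lemma exp_mm: "exp (- \<alpha> * complex_of_real (x + y)) = exp (- \<alpha> * complex_of_real x) * exp (- \<alpha> * complex_of_real y)"
  by (simp only: of_real_add distrib_left exp_add)

lemma Fh_shift:
  assumes "z \<notin> A"
  shows "Fh l1 l2 m1 m2 z A \<alpha> (case_nat s \<omega>) = exp (- \<alpha> * complex_of_real (fst s / qout l1 l2 m1 m2 z)) *
     (if jump l1 l2 m1 m2 z (snd s) \<in> A then 1 else Fh l1 l2 m1 m2 (jump l1 l2 m1 m2 z (snd s)) A \<alpha> \<omega>)"
proof (cases "jump l1 l2 m1 m2 z (snd s) \<in> A")
  case True
  have j1: "jump_into l1 l2 m1 m2 z A (case_nat s \<omega>) 1"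
    using True assms by (auto simp: jump_into_def)
  have "(LEAST n. jump_into l1 l2 m1 m2 z A (case_nat s \<omega>) n) = 1"
    by (rule Least_equality) (use j1 in \<open>auto simp: jump_into_def\<close>)
  then show ?thesis using True j1 unfolding Fh_def
    by (auto simp: jtime_def)
next
  case False
  note sh = jump_into_shift[of l1 l2 m1 m2 z s A, OF False]
  let ?z = "jump l1 l2 m1 m2 z (snd s)"
  show ?thesis
  proof (cases "\<exists>n. jump_into l1 l2 m1 m2 ?z A \<omega> n")
    case True
    then have ex: "\<exists>n. jump_into l1 l2 m1 m2 z A (case_nat s \<omega>) n" using sh by blast
    have L: "(LEAST n. jump_into l1 l2 m1 m2 z A (case_nat s \<omega>) n) = Suc (LEAST n. jump_into l1 l2 m1 m2 ?z A \<omega> n)"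
    proof (rule Least_equality)
      show "jump_into l1 l2 m1 m2 z A (case_nat s \<omega>) (Suc (LEAST n. jump_into l1 l2 m1 m2 ?z A \<omega> n))"
        using sh LeastI_ex[OF True] by blast
    next
      fix y assume "jump_into l1 l2 m1 m2 z A (case_nat s \<omega>) y"
      then obtain m where "y = Suc m" "jump_into l1 l2 m1 m2 ?z A \<omega> m" using sh by blast
      then show "Suc (LEAST n. jump_into l1 l2 m1 m2 ?z A \<omega> n) \<le> y" by (simp add: Least_le)
    qed
    have "Fh l1 l2 m1 m2 z A \<alpha> (case_nat s \<omega>) = exp (- \<alpha> * complex_of_real (fst s / qout l1 l2 m1 m2 z + jtime l1 l2 m1 m2 ?z \<omega> (LEAST n. jump_into l1 l2 m1 m2 ?z A \<omega> n)))"
      using ex unfolding Fh_def L jtime_shift by simp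
    also have "\<dots> = exp (- \<alpha> * complex_of_real (fst s / qout l1 l2 m1 m2 z)) * Fh l1 l2 m1 m2 ?z A \<alpha> \<omega>"
      unfolding exp_mm using True unfolding Fh_def by simp
    finally show ?thesis using False by simp
  next
    case nex: False
    then have "\<not> (\<exists>n. jump_into l1 l2 m1 m2 z A (case_nat s \<omega>) n)" using sh by blast
    then show ?thesis using False nex unfolding Fh_def by simp
  qed
qed

lemma comp_meas: "(\<lambda>\<omega>. \<omega> k) \<in> measurable ctmc_space (borel \<Otimes>\<^sub>M borel)"
proof -
  have "(\<lambda>\<omega>. \<omega> k) \<in> measurable ctmc_space M0" unfolding ctmc_space_def by measurable
  then show ?thesis by (simp add: measurable_cong_sets[OF refl sets_M0])
qed

lemma fst_meas[measurable]: "(\<lambda>\<omega>. fst (\<omega> k)) \<in> borel_measurable ctmc_space"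
  using measurable_compose[OF comp_meas measurable_fst] by simp
lemma snd_meas[measurable]: "(\<lambda>\<omega>. snd (\<omega> k)) \<in> borel_measurable ctmc_space"
  using measurable_compose[OF comp_meas measurable_snd] by simp

declare jchain_meas[measurable]

lemma jump_into_meas[measurable]: "(\<lambda>\<omega>. jump_into l1 l2 m1 m2 z A \<omega> n) \<in> measurable ctmc_space (count_space UNIV)"
proof -
  have p: "(\<lambda>\<omega>. (jchain l1 l2 m1 m2 z \<omega> (n-1), jchain l1 l2 m1 m2 z \<omega> n)) \<in> measurable ctmc_space (count_space UNIV)"
    by (rule measurable_compose_countable[where f="\<lambda>a \<omega>. (a, jchain l1 l2 m1 m2 z \<omega> n)", OF _ jchain_meas])
       (rule measurable_compose_countable[where f="\<lambda>b \<omega>. (a, b)" for a, OF _ jchain_meas], simp)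
  have "(\<lambda>\<omega>. (\<lambda>(a,b). n \<ge> 1 \<and> b \<in> A \<and> a \<noteq> b) (jchain l1 l2 m1 m2 z \<omega> (n-1), jchain l1 l2 m1 m2 z \<omega> n)) \<in> measurable ctmc_space (count_space UNIV)"
    using measurable_compose[OF p, of "\<lambda>(a,b). n \<ge> 1 \<and> b \<in> A \<and> a \<noteq> b" "count_space UNIV"] by simp
  then show ?thesis unfolding jump_into_def by simp
qed

lemma jtime_meas[measurable]: "(\<lambda>\<omega>. jtime l1 l2 m1 m2 z \<omega> n) \<in> borel_measurable ctmc_space"
proof -
  have q: "(\<lambda>\<omega>. qout l1 l2 m1 m2 (jchain l1 l2 m1 m2 z \<omega> k)) \<in> borel_measurable ctmc_space" for k
    using measurable_compose[OF jchain_meas, of "qout l1 l2 m1 m2" borel] by simp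
  show ?thesis unfolding jtime_def using q by measurable
qed

lemma Fh_meas[measurable]: "Fh l1 l2 m1 m2 z A \<alpha> \<in> borel_measurable ctmc_space"
proof -
  have L: "(\<lambda>\<omega>. LEAST n. jump_into l1 l2 m1 m2 z A \<omega> n) \<in> measurable ctmc_space (count_space UNIV)"
    by measurable
  have T: "(\<lambda>\<omega>. jtime l1 l2 m1 m2 z \<omega> (LEAST n. jump_into l1 l2 m1 m2 z A \<omega> n)) \<in> borel_measurable ctmc_space"
    by (rule measurable_compose_countable[where f="\<lambda>n \<omega>. jtime l1 l2 m1 m2 z \<omega> n", OF jtime_meas L])
  have E: "Measurable.pred ctmc_space (\<lambda>\<omega>. \<exists>n. jump_into l1 l2 m1 m2 z A \<omega> n)"
    by measurable
  show ?thesis unfolding Fh_def[abs_def] using T E by measurable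
qed

lemma probE1: "prob_space E1" by (rule prob_space_exponential_density) simp
lemma probU1: "prob_space U1" by (rule prob_space_uniform_measure) auto
lemma probM0: "prob_space M0" by (rule prob_space_pair[OF probE1 probU1])

interpretation SS: sequence_space M0
  unfolding sequence_space_def by (rule product_prob_spaceI) (rule probM0)

interpretation PE: pair_sigma_finite E1 U1
proof -
  interpret A: prob_space E1 by (rule probE1)
  interpret B: prob_space U1 by (rule probU1)
  show "pair_sigma_finite E1 U1" by unfold_locales
qed

interpretation P0: prob_space M0 by (rule probM0)
interpretation PU: prob_space U1 by (rule probU1)
interpretation PE1: prob_space E1 by (rule probE1)

lemma ctmc_eq: "ctmc_space = SS.S" unfolding ctmc_space_def ..

interpretation PS: prob_space ctmc_space unfolding ctmc_eq by (rule SS.P.prob_space_axioms)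

lemma AE_E1: "AE x in E1. x \<ge> 0"
  by (subst AE_density) (auto simp: exponential_density_def)

lemma AE_M0: "AE s in M0. fst s \<ge> 0"
proof (rule PE.AE_pair_measure)
  have "Measurable.pred (borel \<Otimes>\<^sub>M borel) (\<lambda>s::real\<times>real. 0 \<le> fst s)" by measurable
  then show "{s \<in> space M0. 0 \<le> fst s} \<in> sets M0"
    unfolding sets_M0 by (simp add: pred_def space_pair_measure)
  show "AE x in E1. AE y in U1. 0 \<le> fst (x, y)"
    using AE_E1 by eventually_elim simp
qed

lemma AE_S: "AE \<omega> in ctmc_space. \<forall>k. fst (\<omega> k) \<ge> 0"
  unfolding AE_all_countable ctmc_eq
  by (intro allI AE_PiM_component[where P="\<lambda>s. fst s \<ge> 0"] probM0 AE_M0) auto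

interpretation P0S: pair_sigma_finite M0 SS.S
proof -
  interpret B: prob_space SS.S by (rule SS.P.prob_space_axioms)
  show "pair_sigma_finite M0 SS.S" by unfold_locales
qed

interpretation PM0S: prob_space "M0 \<Otimes>\<^sub>M SS.S"
  by (rule prob_space_pair[OF probM0 SS.P.prob_space_axioms])

lemma norm_exp_le1: "0 \<le> Re \<alpha> \<Longrightarrow> 0 \<le> t \<Longrightarrow> norm (exp (- \<alpha> * complex_of_real t)) \<le> 1"
  by (simp add: mult_nonneg_nonneg)

lemma qout_nonneg: "0 \<le> l1 \<Longrightarrow> 0 \<le> l2 \<Longrightarrow> 0 \<le> m1 \<Longrightarrow> 0 \<le> m2 \<Longrightarrow> 0 \<le> qout l1 l2 m1 m2 z"
  unfolding qout_def by (cases z) auto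

lemma jtime_nonneg:
  assumes "0 \<le> l1" "0 \<le> l2" "0 \<le> m1" "0 \<le> m2" "\<forall>k. fst (\<omega> k) \<ge> 0"
  shows "0 \<le> jtime l1 l2 m1 m2 z \<omega> n"
  unfolding jtime_def using assms qout_nonneg[OF assms(1-4)] by (intro sum_nonneg divide_nonneg_nonneg) auto

lemma Fh_bound:
  assumes "0 \<le> l1" "0 \<le> l2" "0 \<le> m1" "0 \<le> m2" "\<forall>k. fst (\<omega> k) \<ge> 0" "0 \<le> Re \<alpha>"
  shows "norm (Fh l1 l2 m1 m2 z A \<alpha> \<omega>) \<le> 1"
  unfolding Fh_def using norm_exp_le1[OF assms(6) jtime_nonneg[OF assms(1-5)]] by auto

lemma hit_bound:
  assumes "0 \<le> l1" "0 \<le> l2" "0 \<le> m1" "0 \<le> m2" "0 \<le> Re \<alpha>"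
  shows "norm (hit_lst l1 l2 m1 m2 z A \<alpha>) \<le> 1"
proof -
  have "norm (hit_lst l1 l2 m1 m2 z A \<alpha>) \<le> (\<integral>\<omega>. norm (Fh l1 l2 m1 m2 z A \<alpha> \<omega>) \<partial>ctmc_space)"
    unfolding hit_Fh by (rule integral_norm_bound)
  also have "\<dots> \<le> (\<integral>\<omega>. 1 \<partial>ctmc_space)"
  proof (rule integral_mono_AE')
    show "integrable ctmc_space (\<lambda>\<omega>. 1::real)" by simp
    show "AE \<omega> in ctmc_space. norm (Fh l1 l2 m1 m2 z A \<alpha> \<omega>) \<le> 1"
      using AE_S by eventually_elim (rule Fh_bound[OF assms(1-4) _ assms(5)])
    show "AE \<omega> in ctmc_space. 0 \<le> (1::real)" by simp
  qed
  finally show ?thesis by (simp add: PS.prob_space)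
qed

lemma first_step:
  assumes pos: "0 \<le> l1" "0 \<le> l2" "0 \<le> m1" "0 \<le> m2" "0 \<le> Re \<alpha>" and zA: "z \<notin> A"
  shows "hit_lst l1 l2 m1 m2 z A \<alpha> = (\<integral>s. exp (- \<alpha> * complex_of_real (fst s / qout l1 l2 m1 m2 z)) *
     (if jump l1 l2 m1 m2 z (snd s) \<in> A then 1 else hit_lst l1 l2 m1 m2 (jump l1 l2 m1 m2 z (snd s)) A \<alpha>) \<partial>M0)"
proof -
  let ?f = "Fh l1 l2 m1 m2 z A \<alpha>"
  have cm: "(\<lambda>(s, \<omega>). case_nat s \<omega>) \<in> measurable (M0 \<Otimes>\<^sub>M SS.S) SS.S" by measurable
  have fm: "?f \<in> borel_measurable SS.S" using Fh_meas unfolding ctmc_eq .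
  have "hit_lst l1 l2 m1 m2 z A \<alpha> = (\<integral>\<omega>. ?f \<omega> \<partial>distr (M0 \<Otimes>\<^sub>M SS.S) SS.S (\<lambda>(s, \<omega>). case_nat s \<omega>))"
    unfolding hit_Fh SS.PiM_iter ctmc_eq ..
  also have "\<dots> = (\<integral>p. ?f (case_nat (fst p) (snd p)) \<partial>(M0 \<Otimes>\<^sub>M SS.S))"
    by (subst integral_distr[OF cm fm]) (simp add: split_beta')
  also have "\<dots> = (\<integral>s. \<integral>\<omega>. ?f (case_nat s \<omega>) \<partial>SS.S \<partial>M0)"
  proof (rule P0S.integral_fst'[symmetric, where f="\<lambda>p. ?f (case_nat (fst p) (snd p))", simplified])
    have ae: "AE p in M0 \<Otimes>\<^sub>M SS.S. \<forall>k. fst (case_nat (fst p) (snd p) k) \<ge> 0"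
    proof -
      have "AE \<omega> in distr (M0 \<Otimes>\<^sub>M SS.S) SS.S (\<lambda>(s, \<omega>). case_nat s \<omega>). \<forall>k. fst (\<omega> k) \<ge> 0"
        unfolding SS.PiM_iter using AE_S unfolding ctmc_eq .
      from AE_distrD[OF cm this] show ?thesis by (simp add: split_beta')
    qed
    show "integrable (M0 \<Otimes>\<^sub>M SS.S) (\<lambda>p. ?f (case_nat (fst p) (snd p)))"
    proof (rule PM0S.integrable_const_bound[where B=1])
      show "AE p in M0 \<Otimes>\<^sub>M SS.S. norm (?f (case_nat (fst p) (snd p))) \<le> 1"
        using ae by eventually_elim (rule Fh_bound[OF pos(1-4) _ pos(5)])
      show "(\<lambda>p. ?f (case_nat (fst p) (snd p))) \<in> borel_measurable (M0 \<Otimes>\<^sub>M SS.S)"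
        using measurable_compose[OF cm fm] by (simp add: split_beta')
    qed
  qed
  also have "\<dots> = (\<integral>s. exp (- \<alpha> * complex_of_real (fst s / qout l1 l2 m1 m2 z)) *
     (if jump l1 l2 m1 m2 z (snd s) \<in> A then 1 else hit_lst l1 l2 m1 m2 (jump l1 l2 m1 m2 z (snd s)) A \<alpha>) \<partial>M0)"
  proof (rule Bochner_Integration.integral_cong[OF refl])
    fix s
    show "(\<integral>\<omega>. ?f (case_nat s \<omega>) \<partial>SS.S) = exp (- \<alpha> * complex_of_real (fst s / qout l1 l2 m1 m2 z)) *
     (if jump l1 l2 m1 m2 z (snd s) \<in> A then 1 else hit_lst l1 l2 m1 m2 (jump l1 l2 m1 m2 z (snd s)) A \<alpha>)"
      unfolding Fh_shift[OF zA] integral_mult_right_zero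
      by (simp add: hit_Fh ctmc_eq SS.P.prob_space)
  qed
  finally show ?thesis .
qed



lemma jump_explicit:
  "jump l1 l2 m1 m2 (a, j) u = (if u * qout l1 l2 m1 m2 (a, j) < l1 then (a + 1, j)
     else if u * qout l1 l2 m1 m2 (a, j) < l1 + l2 then (a, j + 1)
     else if j = 0 then (a - 1, 0) else (a, j - 1))"
  unfolding jump_def rate_def Let_def by auto

lemma first_step2:
  assumes pos: "0 < l1" "0 < l2" "0 < m1" "0 < m2" "0 \<le> Re \<alpha>" and zA: "(a, j) \<notin> A"
    and aj: "j = 0 \<longrightarrow> 1 \<le> a"
  defines "H \<equiv> (\<lambda>w. if w \<in> A then 1 else hit_lst l1 l2 m1 m2 w A \<alpha>)"
  defines "m \<equiv> (if j = 0 then m1 else m2)"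
  defines "w3 \<equiv> (if j = 0 then (a - 1, 0) else (a, j - 1))"
  shows "(complex_of_real (l1 + l2 + m) + \<alpha>) * hit_lst l1 l2 m1 m2 (a, j) A \<alpha> =
     of_real l1 * H (a + 1, j) + of_real l2 * H (a, j + 1) + of_real m * H w3"
proof -
  let ?q = "qout l1 l2 m1 m2 (a, j)"
  have q: "?q = l1 + l2 + m" using aj unfolding qout_def m_def by auto
  have qp: "0 < ?q" using q pos unfolding m_def by auto
  have qnz: "complex_of_real l1 + complex_of_real l2 + complex_of_real m \<noteq> 0"
  proof
    assume "complex_of_real l1 + complex_of_real l2 + complex_of_real m = 0"
    then have "Re (complex_of_real l1 + complex_of_real l2 + complex_of_real m) = 0" by simp
    then show False using q qp by simp
  qed
  let ?f = "\<lambda>x::real. exp (- \<alpha> * complex_of_real (x / ?q))"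
  let ?g = "\<lambda>u. H (jump l1 l2 m1 m2 (a, j) u)"
  have Hb: "norm (H w) \<le> 1" for w
    unfolding H_def using hit_bound[of l1 l2 m1 m2 \<alpha> w A] pos by auto
  have gm: "?g \<in> borel_measurable borel"
    using measurable_compose[OF jump_meas2, of H] by simp
  have intg: "integrable M0 (\<lambda>s. ?f (fst s) * ?g (snd s))"
  proof (rule SS.M.integrable_const_bound[where B=1])
    show "AE s in M0. norm (?f (fst s) * ?g (snd s)) \<le> 1"
      using AE_M0
    proof eventually_elim
      case (elim s)
      have "norm (?f (fst s)) \<le> 1"
        using qp elim pos(5) by (intro norm_exp_le1) auto
      then show ?case using Hb[of "jump l1 l2 m1 m2 (a, j) (snd s)"]
        by (simp add: norm_mult mult_le_one)
    qed
    have "(\<lambda>s. ?f (fst s) * ?g (snd s)) \<in> borel_measurable (borel \<Otimes>\<^sub>M borel)"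
      using gm by measurable
    then show "(\<lambda>s. ?f (fst s) * ?g (snd s)) \<in> borel_measurable M0"
      by (simp add: measurable_cong_sets[OF sets_M0 refl])
  qed
  have "hit_lst l1 l2 m1 m2 (a, j) A \<alpha> = (\<integral>s. ?f (fst s) * ?g (snd s) \<partial>M0)"
    unfolding first_step[OF less_imp_le[OF pos(1)] less_imp_le[OF pos(2)] less_imp_le[OF pos(3)] less_imp_le[OF pos(4)] pos(5) zA]
    unfolding H_def by (simp add: if_distrib)
  also have "\<dots> = (\<integral>x. \<integral>u. ?f x * ?g u \<partial>U1 \<partial>E1)"
    using PE.integral_fst'[OF intg] by simp
  also have "\<dots> = (\<integral>x. ?f x \<partial>E1) * (\<integral>u. ?g u \<partial>U1)"
    by simp
  also have "(\<integral>x. ?f x \<partial>E1) = of_real ?q / (of_real ?q + \<alpha>)"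
    by (rule E1_int[OF qp pos(5)])
  also have "(\<integral>u. ?g u \<partial>U1) = (of_real l1 * H (a + 1, j) + of_real l2 * H (a, j + 1) + of_real (?q - l1 - l2) * H w3) / of_real ?q"
  proof -
    have "(\<integral>u. ?g u \<partial>U1) = (\<integral>u. (if u * ?q < l1 then H (a + 1, j) else if u * ?q < l1 + l2 then H (a, j + 1) else H w3) \<partial>U1)"
    proof -
      have "?g u = (if u * ?q < l1 then H (a + 1, j) else if u * ?q < l1 + l2 then H (a, j + 1) else H w3)" for u
        unfolding jump_explicit w3_def by auto
      then show ?thesis by simp
    qed
    also have "\<dots> = (of_real l1 * H (a + 1, j) + of_real l2 * H (a, j + 1) + of_real (?q - l1 - l2) * H w3) / of_real ?q"
      by (rule U1_int) (use pos q m_def in auto)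
    finally show ?thesis .
  qed
  finally have "hit_lst l1 l2 m1 m2 (a, j) A \<alpha> = (of_real l1 * H (a + 1, j) + of_real l2 * H (a, j + 1) + of_real m * H w3) / (of_real ?q + \<alpha>)"
    using qp qnz by (simp add: q)
  moreover have "of_real ?q + \<alpha> \<noteq> 0"
  proof
    assume "of_real ?q + \<alpha> = 0"
    then have "Re (of_real ?q + \<alpha>) = 0" by simp
    then show False using qp pos(5) by simp
  qed
  ultimately show ?thesis by (simp add: q field_simps)
qed



lemma contraction_zero:
  fixes d :: "nat \<Rightarrow> nat \<Rightarrow> complex" and l1 l2 m1 m2 B :: real
  assumes pos: "0 < l1" "0 < l2" "0 < m1" "0 < m2" "0 < Re \<alpha>"
    and bnd: "\<And>k j. norm (d k j) \<le> B"
    and d00: "d 0 0 = 0"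
    and eq: "\<And>k j. 1 \<le> k \<Longrightarrow> (of_real (l1 + l2 + (if j = 0 then m1 else m2)) + \<alpha>) * d k j =
        of_real l1 * d (k + 1) j + of_real l2 * d k (j + 1) +
        of_real (if j = 0 then m1 else m2) * (if j = 0 then d (k - 1) 0 else d k (j - 1))"
    and k: "1 \<le> k"
  shows "d k j = 0"
proof -
  define Qm where "Qm = l1 + l2 + m1 + m2"
  define c where "c = Qm / (Qm + Re \<alpha>)"
  have B0: "0 \<le> B" using bnd[of 0 0] norm_ge_zero order_trans by blast
  have c0: "0 \<le> c" "c < 1" using pos unfolding c_def Qm_def by (auto simp: divide_simps)
  have step: "\<forall>k\<ge>1. \<forall>j. norm (d k j) \<le> c ^ n * B" for n
  proof (induction n)
    case 0 then show ?case using bnd by simp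
  next
    case (Suc n)
    show ?case
    proof (intro allI impI)
      fix k j :: nat assume k1: "1 \<le> k"
      define m where "m = (if j = 0 then m1 else m2)"
      define t where "t = (if j = 0 then d (k - 1) 0 else d k (j - 1))"
      have m0: "0 < m" "m \<le> m1 + m2" using pos unfolding m_def by auto
      have b1: "norm (d (k + 1) j) \<le> c ^ n * B" using Suc by simp
      have b2: "norm (d k (j + 1)) \<le> c ^ n * B" using Suc k1 by simp
      have b3: "norm t \<le> c ^ n * B"
        unfolding t_def using Suc k1 d00 B0 c0 by (cases "k = 1") (auto simp: zero_le_mult_iff)
      have e: "(of_real (l1 + l2 + m) + \<alpha>) * d k j = of_real l1 * d (k + 1) j + of_real l2 * d k (j + 1) + of_real m * t"
        using eq[OF k1, of j] unfolding m_def t_def by simp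
      have "norm ((of_real (l1 + l2 + m) + \<alpha>) * d k j) \<le> l1 * (c ^ n * B) + l2 * (c ^ n * B) + m * (c ^ n * B)"
        unfolding e using pos m0 b1 b2 b3
        by (intro order_trans[OF norm_triangle_ineq] add_mono order_trans[OF norm_triangle_ineq])
           (auto simp: norm_mult intro!: mult_left_mono)
      moreover have "l1 + l2 + m + Re \<alpha> \<le> norm (of_real (l1 + l2 + m) + \<alpha>)"
        using complex_Re_le_cmod[of "of_real (l1 + l2 + m) + \<alpha>"] by simp
      ultimately have "(l1 + l2 + m + Re \<alpha>) * norm (d k j) \<le> (l1 + l2 + m) * (c ^ n * B)"
      proof -
        assume A: "norm ((of_real (l1 + l2 + m) + \<alpha>) * d k j) \<le> l1 * (c ^ n * B) + l2 * (c ^ n * B) + m * (c ^ n * B)"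
          and Bq: "l1 + l2 + m + Re \<alpha> \<le> norm (of_real (l1 + l2 + m) + \<alpha>)"
        have "(l1 + l2 + m + Re \<alpha>) * norm (d k j) \<le> norm (of_real (l1 + l2 + m) + \<alpha>) * norm (d k j)"
          by (rule mult_right_mono[OF Bq norm_ge_zero])
        also have "\<dots> = norm ((of_real (l1 + l2 + m) + \<alpha>) * d k j)" by (simp add: norm_mult)
        also have "\<dots> \<le> l1 * (c ^ n * B) + l2 * (c ^ n * B) + m * (c ^ n * B)" using A .
        also have "\<dots> = (l1 + l2 + m) * (c ^ n * B)" by (simp only: distrib_right)
        finally show ?thesis .
      qed
      moreover have Yp: "0 < l1 + l2 + m + Re \<alpha>" using pos m0 by simp
      ultimately have "norm (d k j) \<le> ((l1 + l2 + m) * (c ^ n * B)) / (l1 + l2 + m + Re \<alpha>)"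
        by (simp add: pos_le_divide_eq mult.commute)
      then have "norm (d k j) \<le> (l1 + l2 + m) / (l1 + l2 + m + Re \<alpha>) * (c ^ n * B)"
        by simp
      also have "\<dots> \<le> c * (c ^ n * B)"
      proof (rule mult_right_mono)
        show "(l1 + l2 + m) / (l1 + l2 + m + Re \<alpha>) \<le> c"
        proof -
          have Qp: "0 < Qm + Re \<alpha>" unfolding Qm_def using pos by simp
          have qQ: "l1 + l2 + m \<le> Qm" unfolding Qm_def using m0 by simp
          have "(l1 + l2 + m) * Re \<alpha> \<le> Qm * Re \<alpha>" using qQ pos(5) by (intro mult_right_mono) auto
          then have "(l1 + l2 + m) * (Qm + Re \<alpha>) \<le> Qm * (l1 + l2 + m + Re \<alpha>)"
            by (simp add: distrib_left distrib_right mult.commute)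
          then have "l1 + l2 + m \<le> Qm * (l1 + l2 + m + Re \<alpha>) / (Qm + Re \<alpha>)"
            using Qp by (simp add: pos_le_divide_eq)
          then have "l1 + l2 + m \<le> c * (l1 + l2 + m + Re \<alpha>)" unfolding c_def by simp
          then show ?thesis by (rule mult_imp_div_pos_le[OF Yp])
        qed
        show "0 \<le> c ^ n * B" using B0 c0 by simp
      qed
      finally show "norm (d k j) \<le> c ^ Suc n * B" by simp
    qed
  qed
  show ?thesis
  proof (rule ccontr)
    assume "d k j \<noteq> 0"
    then have np: "0 < norm (d k j) / (B + 1)" using B0 by simp
    obtain n where n: "c ^ n < norm (d k j) / (B + 1)"
      using real_arch_pow_inv[OF np c0(2)] by blast
    have "c ^ n * B \<le> c ^ n * (B + 1)" using c0 by (intro mult_left_mono) auto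
    also have "\<dots> < norm (d k j)" using n B0 by (simp add: pos_less_divide_eq)
    finally show False using step[of n] k by (meson not_less)
  qed
qed



lemma rec_unique:
  fixes \<psi> :: "nat \<Rightarrow> complex" and r1 r2 w :: complex and l m B :: real
  assumes r1: "of_real l * r1^2 - w * r1 + of_real m = 0"
    and r2: "of_real l * r2^2 - w * r2 + of_real m = 0"
    and n1: "norm r1 \<le> 1" and n2: "1 < norm r2" and l: "l \<noteq> 0"
    and rec: "\<And>j. 1 \<le> j \<Longrightarrow> of_real l * \<psi> (j + 1) = w * \<psi> j - of_real m * \<psi> (j - 1)"
    and bnd: "\<And>j. norm (\<psi> j) \<le> B"
  shows "\<psi> 1 = \<psi> 0 * r1"
proof (rule ccontr)
  assume ne: "\<psi> 1 \<noteq> \<psi> 0 * r1"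
  define e where "e j = \<psi> j - \<psi> 0 * r1 ^ j" for j
  have e1: "e 1 \<noteq> 0" using ne unfolding e_def by simp
  have rne: "r1 \<noteq> r2" using n1 n2 by auto
  define C where "C = e 1 / (r2 - r1)"
  define E where "E j = C * (r2 ^ j - r1 ^ j)" for j
  have powrec: "of_real l * r ^ (j + 2) = w * r ^ (j + 1) - of_real m * r ^ j"
    if "of_real l * r^2 - w * r + of_real m = 0" for r :: complex and j
  proof -
    have "r ^ j * (of_real l * r^2 - w * r + of_real m) = 0" using that by simp
    then show ?thesis by (simp add: algebra_simps power_add power2_eq_square)
  qed
  have erec: "of_real l * e (j + 2) = w * e (j + 1) - of_real m * e j" for j
  proof -
    have "of_real l * e (j + 2) = of_real l * \<psi> (j + 2) - \<psi> 0 * (of_real l * r1 ^ (j + 2))"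
      unfolding e_def by (simp add: algebra_simps)
    also have "of_real l * \<psi> (j + 2) = w * \<psi> (j + 1) - of_real m * \<psi> j"
      using rec[of "j + 1"] by (simp add: numeral_2_eq_2)
    also have "of_real l * r1 ^ (j + 2) = w * r1 ^ (j + 1) - of_real m * r1 ^ j"
      by (rule powrec[OF r1])
    finally show ?thesis unfolding e_def by (simp add: algebra_simps)
  qed
  have Erec: "of_real l * E (j + 2) = w * E (j + 1) - of_real m * E j" for j
  proof -
    have "of_real l * (r2 ^ (j + 2) - r1 ^ (j + 2)) = w * (r2 ^ (j + 1) - r1 ^ (j + 1)) - of_real m * (r2 ^ j - r1 ^ j)"
    proof -
      have "of_real l * (r2 ^ (j + 2) - r1 ^ (j + 2)) = of_real l * r2 ^ (j + 2) - of_real l * r1 ^ (j + 2)"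
        by (simp add: algebra_simps)
      also have "\<dots> = (w * r2 ^ (j + 1) - of_real m * r2 ^ j) - (w * r1 ^ (j + 1) - of_real m * r1 ^ j)"
        by (simp only: powrec[OF r1] powrec[OF r2])
      finally show ?thesis by (simp add: algebra_simps)
    qed
    then have "C * (of_real l * (r2 ^ (j + 2) - r1 ^ (j + 2))) = C * (w * (r2 ^ (j + 1) - r1 ^ (j + 1)) - of_real m * (r2 ^ j - r1 ^ j))"
      by simp
    then show ?thesis unfolding E_def by (simp only: mult.left_commute right_diff_distrib)
  qed
  have lc: "(of_real l :: complex) \<noteq> 0" using l by simp
  have eE: "e j = E j \<and> e (j + 1) = E (j + 1)" for j
  proof (induction j)
    case 0 then show ?case using rne unfolding E_def e_def C_def by simp
  next
    case (Suc j)
    then have "of_real l * e (j + 2) = of_real l * E (j + 2)" using erec[of j] Erec[of j] by simp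
    then have "e (j + 2) = E (j + 2)" using lc by simp
    then show ?case using Suc by simp
  qed
  have eb: "norm (e j) \<le> 2 * B" for j
  proof -
    have "norm (\<psi> 0 * r1 ^ j) \<le> B"
      using bnd[of 0] n1 by (simp add: norm_mult norm_power) (meson mult_left_le norm_ge_zero order_trans power_le_one)
    then show ?thesis unfolding e_def using bnd[of j] norm_triangle_ineq4[of "\<psi> j" "\<psi> 0 * r1 ^ j"] by simp
  qed
  define K where "K = 1 + 2 * B * norm (r2 - r1) / norm (e 1)"
  obtain j where j: "K < norm r2 ^ j" using real_arch_pow[OF n2] by blast
  have "norm r2 ^ j - 1 \<le> norm (r2 ^ j - r1 ^ j)"
  proof -
    have "norm (r1 ^ j) \<le> 1" using n1 by (simp add: norm_power power_le_one)
    then show ?thesis using norm_triangle_ineq2[of "r2 ^ j" "r1 ^ j"] by (simp add: norm_power)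
  qed
  also have "norm (r2 ^ j - r1 ^ j) = norm (E j) * norm (r2 - r1) / norm (e 1)"
    unfolding E_def C_def using e1 rne by (simp add: norm_divide norm_mult)
  also have "\<dots> \<le> 2 * B * norm (r2 - r1) / norm (e 1)"
    using eb[of j] eE[of j] e1 by (simp add: divide_right_mono mult_right_mono)
  finally show False using j unfolding K_def by simp
qed



lemma phi_roots:
  fixes l m :: real and s :: complex
  assumes l: "0 < l" and m: "0 < m" and s: "0 < Re s"
  defines "w \<equiv> of_real l + of_real m + s"
  defines "dd \<equiv> csqrt (w^2 - 4 * of_real l * of_real m)"
  defines "r1 \<equiv> (w - dd) / (2 * of_real l)"
  defines "r2 \<equiv> (w + dd) / (2 * of_real l)"
  shows "of_real l * r1^2 - w * r1 + of_real m = 0"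
    "of_real l * r2^2 - w * r2 + of_real m = 0"
    "norm r1 < 1" "1 < norm r2"
proof -
  have d2: "dd^2 = w^2 - 4 * of_real l * of_real m" unfolding dd_def by simp
  have lc: "(of_real l :: complex) \<noteq> 0" using l by simp
  show "of_real l * r1^2 - w * r1 + of_real m = 0"
  proof -
    have "of_real l * r1^2 - w * r1 + of_real m = (dd^2 - w^2 + 4 * of_real l * of_real m) / (4 * of_real l)"
      unfolding r1_def using lc by (simp add: field_simps power2_eq_square)
    then show ?thesis using d2 by simp
  qed
  show "of_real l * r2^2 - w * r2 + of_real m = 0"
  proof -
    have "of_real l * r2^2 - w * r2 + of_real m = (dd^2 - w^2 + 4 * of_real l * of_real m) / (4 * of_real l)"
      unfolding r2_def using lc by (simp add: field_simps power2_eq_square)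
    then show ?thesis using d2 by simp
  qed
  define a where "a = Re w"
  define b where "b = Im w"
  define x where "x = Re dd"
  define y where "y = Im dd"
  have a: "l + m < a" unfolding a_def w_def using s by simp
  have x0: "0 \<le> x" unfolding x_def dd_def by (rule Re_csqrt)
  have ReE: "x^2 - y^2 = a^2 - b^2 - 4 * l * m"
    using arg_cong[OF d2, of Re] unfolding x_def y_def a_def b_def by (simp add: power2_eq_square mult.commute)
  have ImE: "x * y = a * b"
    using arg_cong[OF d2, of Im] unfolding x_def y_def a_def b_def by (simp add: power2_eq_square mult.commute)
  have lm: "4 * l * m < a^2"
  proof -
    have "(l + m)^2 - 4 * l * m = (l - m)^2" by (simp add: power2_eq_square algebra_simps)
    then have "4 * l * m \<le> (l + m)^2" using zero_le_power2[of "l - m"] by linarith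
    also have "\<dots> < a^2" using a l m by (intro power_strict_mono) auto
    finally show ?thesis .
  qed
  have xp: "0 < x"
  proof (rule ccontr)
    assume "\<not> 0 < x"
    then have "x = 0" using x0 by simp
    then have "b = 0" using ImE a l m by simp
    then have "y^2 = 4 * l * m - a^2" using ReE \<open>x = 0\<close> by simp
    then show False using lm zero_le_power2[of y] by linarith
  qed
  have key: "0 < a * x + b * y"
  proof -
    have "x * (a * x + b * y) = a * (x^2 + b^2)" using ImE by (simp add: algebra_simps power2_eq_square)
    moreover have "0 < a * (x^2 + b^2)" using a l m xp by (intro mult_pos_pos) (auto intro: add_pos_nonneg)
    ultimately have "0 < x * (a * x + b * y)" by simp
    then show ?thesis using xp by (simp add: zero_less_mult_iff)
  qed
  have nlt: "norm (w - dd) < norm (w + dd)"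
  proof -
    have "(norm (w - dd))^2 = (a - x)^2 + (b - y)^2" unfolding a_def b_def x_def y_def by (simp add: cmod_power2)
    moreover have "(norm (w + dd))^2 = (a + x)^2 + (b + y)^2" unfolding a_def b_def x_def y_def by (simp add: cmod_power2)
    ultimately have "(norm (w - dd))^2 < (norm (w + dd))^2" using key by (simp add: power2_eq_square algebra_simps)
    then show ?thesis by (simp add: power_less_imp_less_base)
  qed
  have n12: "norm r1 < norm r2" unfolding r1_def r2_def using nlt l by (simp add: norm_divide divide_strict_right_mono)
  have prod: "r1 * r2 = of_real m / of_real l"
  proof -
    have "r1 * r2 = (w^2 - dd^2) / (4 * (of_real l)^2)" unfolding r1_def r2_def by (simp add: field_simps power2_eq_square)
    also have "w^2 - dd^2 = 4 * of_real l * of_real m" using d2 by simp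
    also have "4 * of_real l * of_real m / (4 * (of_real l)^2) = (of_real m / of_real l :: complex)"
      using lc by (simp add: power2_eq_square)
    finally show ?thesis .
  qed
  have sum: "r1 + r2 = w / of_real l" unfolding r1_def r2_def using lc by (simp add: field_simps)
  define p where "p = m / l"
  have np: "norm r1 * norm r2 = p" using arg_cong[OF prod, of norm] l m unfolding p_def by (simp add: norm_mult norm_divide)
  have ns: "1 + p < norm r1 + norm r2"
  proof -
    have "norm (w / of_real l) = norm w / l" using l by (simp add: norm_divide)
    moreover have "a \<le> norm w" unfolding a_def by (rule complex_Re_le_cmod)
    ultimately have "(l + m) / l < norm (r1 + r2)" using a l unfolding sum by (simp add: divide_strict_right_mono)
    moreover have "norm (r1 + r2) \<le> norm r1 + norm r2" by (rule norm_triangle_ineq)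
    moreover have "(l + m) / l = 1 + p" unfolding p_def using l by (simp add: field_simps)
    ultimately show ?thesis by simp
  qed
  have neg: "(1 - norm r1) * (1 - norm r2) < 0"
    using np ns by (simp add: algebra_simps)
  then show "norm r1 < 1" "1 < norm r2" using n12 by (auto simp: mult_less_0_iff)
qed



theorem proposition7:
  fixes l1 l2 m1 m2 :: real and \<alpha> :: complex and i :: nat
  assumes "l1 > 0" "l2 > 0" "m1 > 0" "m2 > 0" "Re \<alpha> > 0"
  defines "G \<equiv> Gfun l1 l2 m1 m2 i \<alpha>"
  shows "(of_real (l1 + l2) + of_real m1 + \<alpha>) * G =
           of_real m1 + of_real l1 * G\<^sup>2
           + of_real l2 * G * phi l2 m2 (of_real l1 * (1 - G) + \<alpha>)"
proof -
  note pos = assms(1-5)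
  define hh where "hh w = hit_lst l1 l2 m1 m2 w {(i, 0)} \<alpha>" for w
  define U where "U k j = (if k = 0 then 1 else hh (i + k, j))" for k j
  have G: "G = U 1 0" unfolding G_def Gfun_def U_def hh_def by simp
  have Ub: "norm (U k j) \<le> 1" for k j
    unfolding U_def hh_def using hit_bound[of l1 l2 m1 m2 \<alpha>] pos by auto
  have FS: "(of_real (l1 + l2 + (if j = 0 then m1 else m2)) + \<alpha>) * U k j =
        of_real l1 * U (k + 1) j + of_real l2 * U k (j + 1) +
        of_real (if j = 0 then m1 else m2) * (if j = 0 then U (k - 1) 0 else U k (j - 1))"
    if k: "1 \<le> k" for k j
  proof -
    have zA: "(i + k, j) \<notin> {(i, 0)}" using k by simp
    have aj: "j = 0 \<longrightarrow> 1 \<le> i + k" using k by simp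
    note fs = first_step2[OF pos(1-4) less_imp_le[OF pos(5)] zA aj]
    have e1: "(if (i + k + 1, j) \<in> {(i, 0)} then 1 else hit_lst l1 l2 m1 m2 (i + k + 1, j) {(i, 0)} \<alpha>) = U (k + 1) j"
      unfolding U_def hh_def by (simp add: add.assoc)
    have e2: "(if (i + k, j + 1) \<in> {(i, 0)} then 1 else hit_lst l1 l2 m1 m2 (i + k, j + 1) {(i, 0)} \<alpha>) = U k (j + 1)"
      unfolding U_def hh_def using k by simp
    have e3: "(\<lambda>w. if w \<in> {(i, 0)} then 1 else hit_lst l1 l2 m1 m2 w {(i, 0)} \<alpha>) (if j = 0 then (i + k - 1, 0) else (i + k, j - 1))
        = (if j = 0 then U (k - 1) 0 else U k (j - 1))"
      unfolding U_def hh_def using k by (auto simp: Suc_le_eq)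
    have e0: "hit_lst l1 l2 m1 m2 (i + k, j) {(i, 0)} \<alpha> = U k j" unfolding U_def hh_def using k by simp
    show ?thesis using fs unfolding e0 e1 e2 e3 by simp
  qed
  \<comment> \<open>Step 1: shift invariance\<close>
  define d where "d k j = U (k + 1) j - G * U k j" for k j
  have dz: "d k j = 0" if k: "1 \<le> k" for k j
  proof (rule contraction_zero[where B=2, OF pos _ _ _ k])
    show "norm (d k j) \<le> 2" for k j
    proof -
      have "norm (G * U k j) \<le> 1" using Ub[of 1 0] Ub[of k j] unfolding G by (simp add: norm_mult mult_le_one)
      then show ?thesis unfolding d_def using Ub[of "k + 1" j] norm_triangle_ineq4[of "U (k + 1) j" "G * U k j"] by simp
    qed
    show "d 0 0 = 0" unfolding d_def G U_def by simp
    fix k j :: nat assume k: "1 \<le> k"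
    define m where "m = (if j = 0 then m1 else m2)"
    have A: "(of_real (l1 + l2 + m) + \<alpha>) * U (k + 1) j = of_real l1 * U (k + 2) j + of_real l2 * U (k + 1) (j + 1) +
        of_real m * (if j = 0 then U k 0 else U (k + 1) (j - 1))"
      using FS[of "k + 1" j] unfolding m_def by (simp add: numeral_2_eq_2)
    have B: "(of_real (l1 + l2 + m) + \<alpha>) * U k j = of_real l1 * U (k + 1) j + of_real l2 * U k (j + 1) +
        of_real m * (if j = 0 then U (k - 1) 0 else U k (j - 1))"
      using FS[OF k, of j] unfolding m_def by simp
    have dk: "d (k - 1) 0 = U k 0 - G * U (k - 1) 0" unfolding d_def using k by simp
    have "(of_real (l1 + l2 + m) + \<alpha>) * d k j = (of_real (l1 + l2 + m) + \<alpha>) * U (k + 1) j - G * ((of_real (l1 + l2 + m) + \<alpha>) * U k j)"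
      unfolding d_def by (simp add: algebra_simps)
    also have "\<dots> = of_real l1 * d (k + 1) j + of_real l2 * d k (j + 1) + of_real m * (if j = 0 then d (k - 1) 0 else d k (j - 1))"
      unfolding A B dk unfolding d_def by (cases "j = 0") (simp_all add: algebra_simps numeral_2_eq_2)
    finally show "(of_real (l1 + l2 + (if j = 0 then m1 else m2)) + \<alpha>) * d k j =
        of_real l1 * d (k + 1) j + of_real l2 * d k (j + 1) +
        of_real (if j = 0 then m1 else m2) * (if j = 0 then d (k - 1) 0 else d k (j - 1))"
      unfolding m_def .
  qed
  have shift: "U (Suc (Suc 0)) j = G * U (Suc 0) j" for j using dz[of 1 j] unfolding d_def by simp
  define \<psi> where "\<psi> j = U 1 j" for j
  have eq0: "(of_real (l1 + l2 + m1) + \<alpha>) * G = of_real l1 * G^2 + of_real l2 * \<psi> 1 + of_real m1"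
  proof -
    have f: "(of_real (l1 + l2 + m1) + \<alpha>) * U 1 0 = of_real l1 * U (Suc (Suc 0)) 0 + of_real l2 * U 1 1 + of_real m1 * U 0 0"
      using FS[of 1 0] by (simp add: numeral_2_eq_2)
    have u00: "U 0 0 = 1" unfolding U_def by simp
    have u20: "U (Suc (Suc 0)) 0 = G^2" using shift[of 0] G by (simp add: power2_eq_square)
    show ?thesis using f unfolding u00 u20 G[symmetric] \<psi>_def by simp
  qed
  define s where "s = of_real l1 * (1 - G) + \<alpha>"
  define w where "w = of_real l2 + of_real m2 + s"
  have rec: "of_real l2 * \<psi> (j + 1) = w * \<psi> j - of_real m2 * \<psi> (j - 1)" if j: "1 \<le> j" for j
  proof -
    have "(of_real (l1 + l2 + m2) + \<alpha>) * \<psi> j = of_real l1 * (G * \<psi> j) + of_real l2 * \<psi> (j + 1) + of_real m2 * \<psi> (j - 1)"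
      using FS[of 1 j] shift[of j] j unfolding \<psi>_def by simp
    then show ?thesis unfolding w_def s_def by (simp add: algebra_simps)
  qed
  have Gb: "norm G \<le> 1" unfolding G by (rule Ub)
  have sp: "0 < Re s"
  proof -
    have "Re G \<le> 1" using Gb complex_Re_le_cmod[of G] by linarith
    then have "0 \<le> l1 * (1 - Re G)" using pos by simp
    then show ?thesis unfolding s_def using pos(5) by simp
  qed
  note R = phi_roots[OF pos(2) pos(4) sp]
  have phi_eq: "phi l2 m2 s = (w - csqrt (w^2 - 4 * of_real l2 * of_real m2)) / (2 * of_real l2)"
    unfolding phi_def w_def ..
  have p1: "\<psi> 1 = \<psi> 0 * phi l2 m2 s"
    unfolding phi_eq
  proof (rule rec_unique[where B=1])
    show "of_real l2 * ((w - csqrt (w\<^sup>2 - 4 * of_real l2 * of_real m2)) / (2 * of_real l2))\<^sup>2 -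
        w * ((w - csqrt (w\<^sup>2 - 4 * of_real l2 * of_real m2)) / (2 * of_real l2)) + of_real m2 = 0"
      using R(1) unfolding w_def .
    show "of_real l2 * ((w + csqrt (w\<^sup>2 - 4 * of_real l2 * of_real m2)) / (2 * of_real l2))\<^sup>2 -
        w * ((w + csqrt (w\<^sup>2 - 4 * of_real l2 * of_real m2)) / (2 * of_real l2)) + of_real m2 = 0"
      using R(2) unfolding w_def .
    show "norm ((w - csqrt (w\<^sup>2 - 4 * of_real l2 * of_real m2)) / (2 * of_real l2)) \<le> 1"
      using R(3) unfolding w_def by simp
    show "1 < norm ((w + csqrt (w\<^sup>2 - 4 * of_real l2 * of_real m2)) / (2 * of_real l2))"
      using R(4) unfolding w_def .
    show "l2 \<noteq> 0" using pos by simp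
    show "\<And>j. 1 \<le> j \<Longrightarrow> of_real l2 * \<psi> (j + 1) = w * \<psi> j - of_real m2 * \<psi> (j - 1)" by (rule rec)
    show "\<And>j. norm (\<psi> j) \<le> 1" unfolding \<psi>_def by (rule Ub)
  qed
  have "\<psi> 0 = G" unfolding \<psi>_def G ..
  with p1 have "\<psi> 1 = G * phi l2 m2 s" by simp
  with eq0 show ?thesis unfolding s_def by (simp add: algebra_simps)
qed

end
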